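(* Let $(p_n)$ be a sequence with $0<\liminf_{n\to\infty} p_n\leq \limsup_{n\to\infty} p_n<1$, let $p=p_n$, $q=q_n=1-p_n$ and $V=npq$, and fix $M>0$. For $\varphi>0$ put $R=|pe^{i\varphi}+q|^n$ and \[ R_2=-\tfrac{1}{2}V,\quad R_4=\tfrac{1}{4}V\big(\tfrac{1}{6}-pq\big),\quad R_6=-\tfrac{1}{6}V\big(\tfrac{1}{120}-\tfrac{1}{4}pq+p^2q^2\big). \] Then, as $n\to\infty$, uniformly for $0<\varphi\leq M/V^{1/4}$, \[ R= e^{R_2\varphi^2}\Big(1+R_4\varphi^4+R_6\varphi^6+\frac{1}{2}R_4^2\varphi^8+\sum_{k=1}^3 O(n^k\varphi^{2k+6})\Big), \] i.e. there are $C>0$ and $N$ such that for all $n\geq N$ and all $0<\varphi\leq M/V^{1/4}$ the quantity $e^{-R_2\varphi^2}R-\big(1+R_4\varphi^4+R_6\varphi^6+\frac{1}{2}R_4^2\varphi^8\big)$ has absolute value at most $C\sum_{k=1}^3 n^k\varphi^{2k+6}$. *)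

theory Defs
  imports "HOL-Analysis.Analysis"
begin

definition binV :: "(nat \<Rightarrow> real) \<Rightarrow> nat \<Rightarrow> real" where
  "binV p n = real n * p n * (1 - p n)"

definition binR :: "(nat \<Rightarrow> real) \<Rightarrow> nat \<Rightarrow> real \<Rightarrow> real" where
  "binR p n \<phi> = cmod (complex_of_real (p n) * exp (\<i> * complex_of_real \<phi>) + complex_of_real (1 - p n)) ^ n"

definition binR2 :: "(nat \<Rightarrow> real) \<Rightarrow> nat \<Rightarrow> real" where
  "binR2 p n = - (1/2) * binV p n"

definition binR4 :: "(nat \<Rightarrow> real) \<Rightarrow> nat \<Rightarrow> real" where
  "binR4 p n = (1/4) * binV p n * (1/6 - p n * (1 - p n))"

definition binR6 :: "(nat \<Rightarrow> real) \<Rightarrow> nat \<Rightarrow> real" where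
  "binR6 p n = - (1/6) * binV p n * (1/120 - (1/4) * p n * (1 - p n) + (p n)^2 * (1 - p n)^2)"

end

theory Submission
  imports Defs
begin


lemma cos_taylor8: "\<bar>1 - cos (x::real) - (x^2/2 - x^4/24 + x^6/720)\<bar> \<le> x^8 / 40320"
proof -
  obtain t where t: "cos x = (\<Sum>m<8. cos_coeff m * x ^ m) + (cos(t + 1/2 * real 8 * pi) / fact 8) * x ^ 8"
    using Maclaurin_cos_expansion[of x 8] by blast
  have s: "(\<Sum>m<8. cos_coeff m * x ^ m) = 1 - x^2/2 + x^4/24 - x^6/720"
    by (simp add: lessThan_nat_numeral cos_coeff_def fact_numeral)
  have f: "fact 8 = (40320::real)" by (simp add: fact_numeral)
  have "\<bar>cos(t + 1/2 * real 8 * pi) / fact 8 * x ^ 8\<bar> \<le> x^8/40320"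
    unfolding f using mult_right_mono[OF abs_cos_le_one[of "t + 1/2 * real 8 * pi"], of "x^8"]
    by (simp add: abs_mult)
  then show ?thesis using t s by simp
qed

lemma ln_taylor3:
  fixes x :: real assumes "\<bar>x\<bar> \<le> 1/2"
  shows "\<bar>ln (1-x) + x + x^2/2 + x^3/3\<bar> \<le> 2*\<bar>x\<bar>^4"
proof -
  define f where "f s = ln (1-s) + s + s^2/2 + s^3/3" for s::real
  have d: "DERIV f s :> (- (s^3)/(1-s))" if "\<bar>s\<bar> \<le> 1/2" for s
  proof -
    have "DERIV f s :> (-1/(1-s) + 1 + s + s^2)" unfolding f_def using that
      by (auto intro!: derivative_eq_intros simp: power2_eq_square field_simps)
    moreover have "-1/(1-s) + 1 + s + s^2 = - (s^3)/(1-s)" using that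
      by (simp add: field_simps power3_eq_cube power2_eq_square)
    ultimately show ?thesis by simp
  qed
  have b: "\<bar>- (s^3)/(1-s)\<bar> \<le> 2*\<bar>x\<bar>^3" if "\<bar>s\<bar> \<le> \<bar>x\<bar>" for s
  proof -
    have "1-s \<ge> 1/2" using that assms by linarith
    have "\<bar>- (s^3)/(1-s)\<bar> = \<bar>s\<bar>^3/(1-s)" using \<open>1-s \<ge> 1/2\<close> by (simp add: abs_mult power_abs)
    also have "\<dots> \<le> \<bar>s\<bar>^3/(1/2)" using \<open>1-s \<ge> 1/2\<close> by (intro divide_left_mono) auto
    also have "\<dots> \<le> 2*\<bar>x\<bar>^3" using that by (simp add: power_mono)
    finally show ?thesis .
  qed
  have f0: "f 0 = 0" by (simp add: f_def)
  have "\<bar>f x\<bar> \<le> 2*\<bar>x\<bar>^4"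
  proof (cases "x = 0")
    case True then show ?thesis using f0 by simp
  next
    case False
    then consider "0 < x" | "x < 0" by linarith
    then show ?thesis
    proof cases
      case 1
      obtain z where z: "0 < z" "z < x" "f x - f 0 = (x - 0) * (- (z^3)/(1-z))"
        using MVT2[OF 1, of f "\<lambda>s. - (s^3)/(1-s)"] d assms by force
      have "\<bar>f x\<bar> = \<bar>x\<bar> * \<bar>- (z^3)/(1-z)\<bar>" using z f0 by (simp add: abs_mult)
      also have "\<dots> \<le> \<bar>x\<bar> * (2*\<bar>x\<bar>^3)" using b[of z] z by (intro mult_left_mono) auto
      also have "\<dots> = 2*\<bar>x\<bar>^4" by (simp add: eval_nat_numeral)
      finally show ?thesis .
    next
      case 2
      obtain z where z: "x < z" "z < 0" "f 0 - f x = (0 - x) * (- (z^3)/(1-z))"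
        using MVT2[OF 2, of f "\<lambda>s. - (s^3)/(1-s)"] d assms by force
      have "f x = -((0 - x) * (- (z^3)/(1-z)))" using z f0 by linarith
      then have "\<bar>f x\<bar> = \<bar>x\<bar> * \<bar>- (z^3)/(1-z)\<bar>" by (simp only: abs_minus_cancel abs_mult) simp
      also have "\<dots> \<le> \<bar>x\<bar> * (2*\<bar>x\<bar>^3)" using b[of z] z by (intro mult_left_mono) auto
      also have "\<dots> = 2*\<bar>x\<bar>^4" by (simp add: eval_nat_numeral)
      finally show ?thesis .
    qed
  qed
  then show ?thesis by (simp add: f_def)
qed

lemma exp_taylor2:
  fixes y Y :: real assumes "\<bar>y\<bar> \<le> Y"
  shows "\<bar>exp y - (1 + y + y^2/2)\<bar> \<le> exp Y * \<bar>y\<bar>^3 / 6"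
proof -
  obtain t where t: "\<bar>t\<bar> \<le> \<bar>y\<bar>" "exp y = (\<Sum>m<3. (y ^ m) / fact m) + (exp t / fact 3) * y ^ 3"
    using Maclaurin_exp_le[of y 3] by blast
  have s: "(\<Sum>m<3. (y ^ m) / fact m) = 1 + y + y^2/2"
    by (simp add: lessThan_nat_numeral fact_numeral)
  have "exp t \<le> exp Y" using t assms by simp
  have "\<bar>(exp t / fact 3) * y ^ 3\<bar> = exp t * \<bar>y\<bar>^3/6" by (simp add: abs_mult power_abs fact_numeral)
  also have "\<dots> \<le> exp Y * \<bar>y\<bar>^3/6" using \<open>exp t \<le> exp Y\<close> by (intro divide_right_mono mult_right_mono) auto
  finally show ?thesis using t s by simp
qed



lemma abs_mult_le: "\<bar>a\<bar> \<le> A \<Longrightarrow> \<bar>b\<bar> \<le> B \<Longrightarrow> \<bar>a*b\<bar> \<le> A*(B::real)"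
  by (simp add: abs_mult mult_mono')

lemma lin6: "\<bar>a\<bar> \<le> (H::real) \<Longrightarrow> \<bar>b\<bar> \<le> 2*H \<Longrightarrow> \<bar>c\<bar> \<le> 3*H \<Longrightarrow> \<bar>d\<bar> \<le> 2*H \<Longrightarrow> 0 \<le> s \<Longrightarrow> s \<le> H \<Longrightarrow> \<bar>-a - b/2 - s/288 - c/3 + d\<bar> \<le> 6*H"
  by (simp only: abs_le_iff) linarith

lemma lin3: "\<bar>a\<bar> \<le> (A::real) \<Longrightarrow> \<bar>b\<bar> \<le> B \<Longrightarrow> \<bar>c\<bar> \<le> C \<Longrightarrow> \<bar>a + b/2 + c\<bar> \<le> A + B/2 + C"
  by (simp only: abs_le_iff) linarith

lemma core:
  fixes t h n K c :: real
  assumes t0: "0 \<le> t" and t1: "t \<le> 1/4" and h0: "0 < h" and h1: "h \<le> 1/4" and n0: "0 \<le> n"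
    and nK: "n*h^2 \<le> K"
    and hc: "\<bar>c - (h/2 - h^2/24 + h^3/720)\<bar> \<le> h^4/40320"
  defines "A4 \<equiv> (1/4) * (n*t) * (1/6 - t)"
  defines "A6 \<equiv> - (1/6) * (n*t) * (1/120 - (1/4) * t + t^2)"
  shows "\<bar>exp ((1/2)*(n*t) * h) * exp (n/2 * ln (1 - 2*t*c))
           - (1 + A4*h^2 + A6*h^3 + (1/2)*A4^2*h^4)\<bar>
         \<le> (3 + 2*exp(2*K)) * (n*h^4 + n^2*h^5 + n^3*h^6)"
proof -
  define x where "x = 2*t*c"
  define P1 where "P1 = t*h - t*h^2/12 + t*h^3/360"
  define y0 where "y0 = t*h - t*h^2/12"
  have hp: "h^2 \<le> h/4" "h^3 \<le> h^2/4" "h^4 \<le> h^3/4" "h^5 \<le> h^4/4" "h^6 \<le> h^5/4"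
    using h0 h1 by (simp_all add: power_Suc eval_nat_numeral mult_le_cancel_left1 mult_left_mono) 
  have hpos: "0 < h^2" "0 < h^3" "0 < h^4" using h0 by auto
  have b1: "\<bar>x - P1\<bar> \<le> h^4"
  proof -
    have "x - P1 = (2*t) * (c - (h/2 - h^2/24 + h^3/720))" unfolding x_def P1_def by (simp add: algebra_simps)
    then have "\<bar>x - P1\<bar> \<le> (1/2) * (h^4/40320)" using hc t0 t1
      by (simp only: ) (rule abs_mult_le, auto)
    then show ?thesis using hpos by linarith
  qed
  have th: "0 \<le> t*h" "t*h \<le> h/4" "0 \<le> t*h^2" "t*h^2 \<le> h^2/4" "0 \<le> t*h^3" "t*h^3 \<le> h^3/4"
    using t0 t1 h0 by (auto intro: mult_right_mono)
  have b2: "\<bar>x - y0\<bar> \<le> h^3" using b1 th hp unfolding P1_def y0_def by (simp only: abs_le_iff) linarith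
  have b3: "\<bar>x - t*h\<bar> \<le> h^2" using b2 th hp unfolding y0_def by (simp only: abs_le_iff) linarith
  have b4: "\<bar>x\<bar> \<le> h/2" using b3 th hp by (simp only: abs_le_iff) linarith
  have by0: "\<bar>y0\<bar> \<le> h/2" using th hp unfolding y0_def by (simp only: abs_le_iff) linarith
  have bth: "\<bar>t*h\<bar> \<le> h/2" using th by simp
  have sq: "\<bar>x^2 - y0^2\<bar> \<le> 2*h^4"
  proof -
    have "x^2 - y0^2 = (x - y0) * (x + y0)" by (simp add: algebra_simps power2_eq_square)
    moreover have "\<bar>x + y0\<bar> \<le> h" using b4 by0 by linarith
    ultimately have "\<bar>x^2 - y0^2\<bar> \<le> h^3 * h" using b2 by (simp only:) (rule abs_mult_le)
    then show ?thesis using hpos by (simp add: power_Suc eval_nat_numeral) 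
  qed
  have cu: "\<bar>x^3 - (t*h)^3\<bar> \<le> 3*h^4"
  proof -
    have "x^3 - (t*h)^3 = (x - t*h) * (x*x + x*(t*h) + (t*h)*(t*h))" by (simp add: algebra_simps power3_eq_cube)
    moreover have "\<bar>x*x + x*(t*h) + (t*h)*(t*h)\<bar> \<le> 3*h^2"
    proof -
      have "\<bar>x*x\<bar> \<le> (h/2)*(h/2)" "\<bar>x*(t*h)\<bar> \<le> (h/2)*(h/2)" "\<bar>(t*h)*(t*h)\<bar> \<le> (h/2)*(h/2)"
        by (rule abs_mult_le; use b4 bth in simp)+
      then show ?thesis by (simp only: power2_eq_square abs_le_iff) linarith
    qed
    ultimately have "\<bar>x^3 - (t*h)^3\<bar> \<le> h^2 * (3*h^2)" using b3 by (simp only:) (rule abs_mult_le)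
    then show ?thesis by (simp add: power_Suc eval_nat_numeral)
  qed
  have xs: "\<bar>x\<bar> \<le> 1/2" using b4 h1 by linarith
  have lnb: "\<bar>ln (1-x) + x + x^2/2 + x^3/3\<bar> \<le> 2*h^4"
  proof -
    have "\<bar>x\<bar>^4 \<le> (h/2)^4" using b4 by (intro power_mono) auto
    moreover have "(h/2)^4 = h^4/16" by (simp add: power_divide)
    ultimately have "\<bar>x\<bar>^4 \<le> h^4" using hpos by linarith
    then show ?thesis using ln_taylor3[OF xs] by linarith
  qed
  define T2 where "T2 = -t*h + (t/12 - t^2/2)*h^2 + (-t/360 + t^2/12 - t^3/3)*h^3"
  have y0sq: "y0^2 = t^2*h^2 - t^2*h^3/6 + t^2*h^4/144" unfolding y0_def by (simp add: algebra_simps power2_eq_square power3_eq_cube power4_eq_xxxx)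
  have t2h: "0 \<le> t^2*h^4" "t^2*h^4 \<le> h^4" using t0 t1 hpos
    by (auto intro!: mult_left_le_one_le simp: power_le_one) 
  have D: "\<bar>ln (1-x) - T2\<bar> \<le> 6*h^4"
  proof -
    have "ln (1-x) - T2 = -(x - P1) - (x^2 - y0^2)/2 - t^2*h^4/288 - (x^3 - (t*h)^3)/3
              + (ln (1-x) + x + x^2/2 + x^3/3)"
      unfolding T2_def P1_def y0sq by (simp add: field_simps power_mult_distrib)
    then show ?thesis using lin6[OF b1 sq cu lnb t2h] by simp
  qed
  define A2 where "A2 = -(1/2)*(n*t)"
  define E where "E = n/2 * ln (1-x) - (A2*h + A4*h^2 + A6*h^3)"
  have Eeq: "E = n/2 * (ln (1-x) - T2)"
    unfolding E_def T2_def A2_def A4_def A6_def by (simp add: field_simps power2_eq_square power3_eq_cube)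
  have Eb: "\<bar>E\<bar> \<le> 3*n*h^4"
  proof -
    have "\<bar>E\<bar> \<le> (n/2) * (6*h^4)" unfolding Eeq using D n0 by (intro abs_mult_le) auto
    then show ?thesis by simp
  qed
  have A4b: "\<bar>A4\<bar> \<le> n"
  proof -
    have "\<bar>t*(1/6 - t)\<bar> \<le> (1/4)*1" using t0 t1 by (intro abs_mult_le) auto
    then have "\<bar>n * (t*(1/6 - t))\<bar> \<le> n*1" using n0 by (intro abs_mult_le) auto
    then show ?thesis unfolding A4_def by (simp add: abs_mult algebra_simps)
  qed
  have A6b: "\<bar>A6\<bar> \<le> n"
  proof -
    have "t^2 \<le> 1/16" using t0 t1 power_mono[of t "1/4" 2] by (simp add: power_divide)
    then have "\<bar>1/120 - (1/4) * t + t^2\<bar> \<le> 1" using t0 t1 zero_le_power2[of t] by (simp only: abs_le_iff) linarith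
    then have "\<bar>t*(1/120 - (1/4) * t + t^2)\<bar> \<le> (1/4)*1" using t0 t1 by (intro abs_mult_le) auto
    then have "\<bar>n * (t*(1/120 - (1/4) * t + t^2))\<bar> \<le> n*1" using n0 by (intro abs_mult_le) auto
    then show ?thesis unfolding A6_def by (simp add: abs_mult algebra_simps)
  qed
  define w where "w = A6*h^3 + E"
  define y where "y = A4*h^2 + w"
  have nh: "n*h^3 \<le> n*h^2/4" "n*h^4 \<le> n*h^3/4" "n*h^5 \<le> n*h^4/4"  using mult_left_mono[OF hp(2) n0] mult_left_mono[OF hp(3) n0] mult_left_mono[OF hp(4) n0] by simp_all
  have a4h: "\<bar>A4*h^2\<bar> \<le> n*h^2" using A4b hpos by (intro abs_mult_le) auto
  have a6h: "\<bar>A6*h^3\<bar> \<le> n*h^3" using A6b hpos by (intro abs_mult_le) auto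
  have wb: "\<bar>w\<bar> \<le> 2*n*h^3" unfolding w_def using a6h Eb nh by (simp only: abs_le_iff) linarith
  have yb: "\<bar>y\<bar> \<le> 2*(n*h^2)" unfolding y_def using a4h wb nh by (simp only: abs_le_iff) linarith
  have yK: "\<bar>y\<bar> \<le> 2*K" using yb nK by linarith
  have ey: "exp ((1/2)*(n*t) * h) * exp (n/2 * ln (1 - 2*t*c)) = exp y"
    unfolding y_def w_def E_def A2_def x_def by (simp add: exp_add[symmetric] algebra_simps)
  have e3: "\<bar>exp y - (1 + y + y^2/2)\<bar> \<le> exp (2*K) * \<bar>y\<bar>^3 / 6" by (rule exp_taylor2[OF yK])
  have y3: "\<bar>y\<bar>^3 \<le> 8 * (n^3*h^6)"
  proof -
    have "\<bar>y\<bar>^3 \<le> (2*(n*h^2))^3" using yb by (intro power_mono) auto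
    then show ?thesis by (simp add: power_mult_distrib power_mult[symmetric])
  qed
  have e3': "\<bar>exp y - (1 + y + y^2/2)\<bar> \<le> exp (2*K) * (8 * (n^3*h^6)) / 6"
  proof -
    have "exp (2*K) * \<bar>y\<bar>^3 / 6 \<le> exp (2*K) * (8 * (n^3*h^6)) / 6"
      by (intro divide_right_mono mult_left_mono y3) auto
    then show ?thesis using e3 by linarith
  qed
  have ysq: "\<bar>y^2 - (A4*h^2)^2\<bar> \<le> 6*(n^2*h^5)"
  proof -
    have "y^2 - (A4*h^2)^2 = w * (2*(A4*h^2) + w)" unfolding y_def by (simp add: algebra_simps power2_eq_square)
    moreover have "\<bar>2*(A4*h^2) + w\<bar> \<le> 3*(n*h^2)" using a4h wb nh by (simp only: abs_le_iff) linarith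
    ultimately have "\<bar>y^2 - (A4*h^2)^2\<bar> \<le> (2*n*h^3) * (3*(n*h^2))" using wb by (simp only:) (rule abs_mult_le)
    then show ?thesis by (simp add: power_Suc eval_nat_numeral algebra_simps)
  qed
  have iden: "exp y - (1 + A4*h^2 + A6*h^3 + (1/2)*A4^2*h^4)
      = E + (y^2 - (A4*h^2)^2)/2 + (exp y - (1 + y + y^2/2))"
    unfolding y_def w_def by (simp add: field_simps power_mult_distrib)
  have pos: "0 \<le> n*h^4" "0 \<le> n^2*h^5" "0 \<le> n^3*h^6" "0 \<le> exp (2*K)" using n0 hpos h0 by auto
  have "\<bar>exp y - (1 + A4*h^2 + A6*h^3 + (1/2)*A4^2*h^4)\<bar>
        \<le> 3*(n*h^4) + 3*(n^2*h^5) + exp (2*K) * (8 * (n^3*h^6)) / 6"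
    unfolding iden using lin3[OF Eb ysq e3'] by (simp only: mult.assoc)
  also have "\<dots> \<le> (3 + 2*exp(2*K)) * (n*h^4 + n^2*h^5 + n^3*h^6)"
  proof -
    have "0 \<le> exp (2*K) * (n^3*h^6)" using pos by simp
    moreover have "exp (2*K) * (8 * (n^3*h^6)) / 6 = (4/3) * (exp (2*K) * (n^3*h^6))" by simp
    ultimately have "exp (2*K) * (8 * (n^3*h^6)) / 6 \<le> 2*exp (2*K) * (n^3*h^6)" by linarith
    moreover have "0 \<le> 2*exp (2*K) * (n*h^4)" "0 \<le> 2*exp (2*K) * (n^2*h^5)" using pos by simp_all
    moreover have "(3 + 2*exp(2*K)) * (n*h^4 + n^2*h^5 + n^3*h^6) = 3*(n*h^4) + 3*(n^2*h^5) + 3*(n^3*h^6)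
       + 2*exp (2*K) * (n*h^4) + 2*exp (2*K) * (n^2*h^5) + 2*exp (2*K) * (n^3*h^6)"
      by (simp only: distrib_left distrib_right mult.assoc)
    ultimately show ?thesis using pos by linarith
  qed
  finally show ?thesis unfolding ey .
qed



lemma binR_eq:
  assumes "0 < 1 - 2*(p n*(1-p n))*(1 - cos \<phi>)"
  shows "binR p n \<phi> = exp (real n/2 * ln (1 - 2*(p n*(1-p n))*(1 - cos \<phi>)))"
proof -
  define u where "u = 1 - 2*(p n*(1-p n))*(1 - cos \<phi>)"
  have u0: "0 < u" using assms u_def by simp
  have "cmod (complex_of_real (p n) * exp (\<i> * complex_of_real \<phi>) + complex_of_real (1 - p n))
        = sqrt ((p n * cos \<phi> + (1 - p n))^2 + (p n * sin \<phi>)^2)"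
    by (simp add: cmod_def Re_exp Im_exp)
  also have "(p n * cos \<phi> + (1 - p n))^2 + (p n * sin \<phi>)^2 = u"
  proof -
    have s: "sin \<phi> * sin \<phi> + cos \<phi> * cos \<phi> = 1" using sin_cos_squared_add[of \<phi>] by (simp add: power2_eq_square)
    have key: "cos \<phi> * (cos \<phi> * (p n * p n)) + sin \<phi> * (sin \<phi> * (p n * p n)) = p n * p n"
      using s by algebra
    show ?thesis unfolding u_def by (simp add: power2_eq_square algebra_simps power_mult_distrib key)
  qed
  also have "sqrt u = exp (ln u / 2)"
    using u0 powr_half_sqrt[of u] by (simp add: powr_def)
  finally have "binR p n \<phi> = exp (ln u / 2) ^ n" by (simp add: binR_def)
  also have "\<dots> = exp (real n * (ln u / 2))" by (rule exp_of_nat_mult[symmetric])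
  finally show ?thesis unfolding u_def by simp
qed

theorem lemma3p2:
  fixes p :: "nat \<Rightarrow> real" and M :: real
  assumes "0 < Liminf sequentially (\<lambda>n. ereal (p n))"
    and "Limsup sequentially (\<lambda>n. ereal (p n)) < 1"
    and "M > 0"
  shows "\<exists>C>0. \<exists>N. \<forall>n\<ge>N. \<forall>\<phi>::real. 0 < \<phi> \<and> \<phi> \<le> M / binV p n powr (1/4) \<longrightarrow>
           \<bar>exp (- binR2 p n * \<phi>^2) * binR p n \<phi>
             - (1 + binR4 p n * \<phi>^4 + binR6 p n * \<phi>^6 + (1/2) * (binR4 p n)^2 * \<phi>^8)\<bar>
           \<le> C * (\<Sum>k\<in>{1..3::nat}. real n ^ k * \<phi> ^ (2*k+6))"
proof -
  obtain a where a: "0 < ereal a" "ereal a < Liminf sequentially (\<lambda>n. ereal (p n))"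
    using ereal_dense2[OF assms(1)] by blast
  obtain b where b: "Limsup sequentially (\<lambda>n. ereal (p n)) < ereal b" "ereal b < 1"
    using ereal_dense2[OF assms(2)] by blast
  have a0: "0 < a" and b1: "b < 1" using a b by auto
  have "eventually (\<lambda>n. ereal a < ereal (p n)) sequentially" by (rule less_LiminfD[OF a(2)])
  moreover have "eventually (\<lambda>n. ereal (p n) < ereal b) sequentially" by (rule Limsup_lessD[OF b(1)])
  ultimately have "eventually (\<lambda>n. a < p n \<and> p n < b) sequentially" by (simp add: eventually_conj)
  then obtain N0 where N0: "\<And>n. n \<ge> N0 \<Longrightarrow> a < p n \<and> p n < b" by (auto simp: eventually_sequentially)
  define c0 where "c0 = a*(1-b)"
  have c0: "0 < c0" using a0 b1 by (simp add: c0_def)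
  define K where "K = M^4/c0"
  define C where "C = 3 + 2*exp(2*K)"
  define N where "N = max (max N0 1) (nat \<lceil>16*M^4/c0\<rceil>)"
  have C0: "C > 0" unfolding C_def using exp_gt_zero[of "2*K"] by linarith
  have "\<forall>n\<ge>N. \<forall>\<phi>::real. 0 < \<phi> \<and> \<phi> \<le> M / binV p n powr (1/4) \<longrightarrow>
           \<bar>exp (- binR2 p n * \<phi>^2) * binR p n \<phi>
             - (1 + binR4 p n * \<phi>^4 + binR6 p n * \<phi>^6 + (1/2) * (binR4 p n)^2 * \<phi>^8)\<bar>
           \<le> C * (\<Sum>k\<in>{1..3::nat}. real n ^ k * \<phi> ^ (2*k+6))"
  proof (intro allI impI)
    fix n :: nat and \<phi> :: real
    assume nN: "n \<ge> N" and ph: "0 < \<phi> \<and> \<phi> \<le> M / binV p n powr (1/4)"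
    have pn: "a < p n" "p n < b" using N0[of n] nN by (auto simp: N_def)
    define t where "t = p n * (1 - p n)"
    have t0: "c0 \<le> t" unfolding t_def c0_def using pn a0 b1 by (intro mult_mono) auto
    have "(p n - 1/2)^2 = 1/4 - t" unfolding t_def by (simp add: power2_eq_square field_simps)
    then have t1: "t \<le> 1/4" using zero_le_power2[of "p n - 1/2"] by linarith
    have n1: "real n \<ge> 1" using nN by (auto simp: N_def)
    have nbig: "real n \<ge> 16*M^4/c0" using nN unfolding N_def by linarith
    have V: "binV p n = real n * t" by (simp add: binV_def t_def)
    have Vpos: "0 < real n * t" using n1 t0 c0 by (simp add: mult_pos_pos)
    define h where "h = \<phi>^2"
    have h0: "0 < h" using ph by (simp add: h_def)
    have "\<phi>^4 \<le> (M / binV p n powr (1/4))^4" using ph by (intro power_mono) auto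
    also have "\<dots> = M^4 / (real n * t)"
    proof -
      have "((real n * t) powr (1/4))^4 = (real n * t) powr (real 4 * (1/4))"
        using Vpos n1 by (subst powr_power) auto
      also have "\<dots> = real n * t" using Vpos by simp
      finally show ?thesis by (simp add: V power_divide)
    qed
    finally have ph4: "h^2 \<le> M^4 / (real n * t)" by (simp add: h_def power_mult[symmetric])
    have nK: "real n * h^2 \<le> K"
    proof -
      have "real n * h^2 \<le> real n * (M^4 / (real n * t))" using ph4 n1 by (intro mult_left_mono) auto
      also have "\<dots> = M^4 / t" using n1 by simp
      also have "\<dots> \<le> M^4/c0" using t0 c0 by (intro divide_left_mono) auto
      finally show ?thesis by (simp add: K_def)
    qed
    have "h^2 \<le> M^4 / (real n * c0)"
    proof -
      have "M^4 / (real n * t) \<le> M^4 / (real n * c0)"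
        using t0 c0 n1 by (intro divide_left_mono mult_left_mono mult_pos_pos) auto
      then show ?thesis using ph4 by linarith
    qed
    also have "\<dots> \<le> M^4 / (16*M^4/c0 * c0)" using nbig c0 assms(3) n1
      by (intro divide_left_mono mult_right_mono mult_pos_pos) auto
    also have "\<dots> = 1/16" using c0 assms(3) by simp
    finally have "h^2 \<le> (1/4)^2" by (simp add: power_divide)
    then have h1: "h \<le> 1/4" by (rule power2_le_imp_le) simp
    have hc: "\<bar>(1 - cos \<phi>) - (h/2 - h^2/24 + h^3/720)\<bar> \<le> h^4/40320"
      using cos_taylor8[of \<phi>] by (simp add: h_def power_mult[symmetric])
    have tt: "0 \<le> t" using t0 c0 by simp
    note co = core[OF tt t1 h0 h1 _ nK hc]
    have u: "0 < 1 - 2*t*(1 - cos \<phi>)"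
    proof -
      have "h^3 \<le> (1/4)^3" "h^4 \<le> (1/4)^4" using h0 h1 by (intro power_mono; simp)+
      then have p34: "h^3 \<le> 1/64" "h^4 \<le> 1/256" by (simp_all add: power_divide)
      have "1 - cos \<phi> - (h/2 - h^2/24 + h^3/720) \<le> h^4/40320" using hc by (simp only: abs_le_iff)
      then have "1 - cos \<phi> \<le> 1/2" using p34 h1 h0 zero_le_power2[of h] by linarith
      moreover have "0 \<le> 1 - cos \<phi>" by simp
      ultimately have "2*t*(1 - cos \<phi>) \<le> 2*(1/4)*(1/2)" using t1 tt by (intro mult_mono) auto
      then show ?thesis by simp
    qed
    have R: "binR p n \<phi> = exp (real n/2 * ln (1 - 2*t*(1 - cos \<phi>)))"
      using binR_eq[of p n \<phi>] u by (simp add: t_def mult.assoc)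
    have e1: "exp (- binR2 p n * \<phi>^2) = exp ((1/2)*(real n*t) * h)"
      by (simp add: binR2_def V h_def)
    have s: "(\<Sum>k\<in>{1..3::nat}. real n ^ k * \<phi> ^ (2*k+6)) = real n*h^4 + (real n)^2*h^5 + (real n)^3*h^6"
    proof -
      have "{1..3::nat} = {1,2,3}" by auto
      then show ?thesis by (simp add: h_def power_mult[symmetric])
    qed
    show "\<bar>exp (- binR2 p n * \<phi>^2) * binR p n \<phi>
             - (1 + binR4 p n * \<phi>^4 + binR6 p n * \<phi>^6 + (1/2) * (binR4 p n)^2 * \<phi>^8)\<bar>
           \<le> C * (\<Sum>k\<in>{1..3::nat}. real n ^ k * \<phi> ^ (2*k+6))"
      using co unfolding s e1 R C_def
      by (simp add: binR4_def binR6_def V t_def h_def power_mult[symmetric] power_mult_distrib)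
  qed
  then show ?thesis using C0 by blast
qed

end
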